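(* For every $n\ge1$ and every $(a_1,\dots,a_n)\in\mathbb R^n\setminus\{0\}$, the system $\dot x_i=x_i\big(\sum_{j>i}a_jx_j-\sum_{j<i}a_jx_j\big)$, $i=1,\dots,n$, admits $n-1$ functionally independent (rational) first integrals; hence it is superintegrable.
   Context: This system is the Hamiltonian vector field of $H=a_1x_1+\dots+a_nx_n$ with respect to the Poisson bracket on $\mathbb R^n$ given by $\{x_i,x_j\}=x_ix_j$ for $1\le i<j\le n$. Functional independence means the differentials are linearly independent on a dense open subset. *)

theory Defs
  imports "HOL-Analysis.Analysis"
begin

text \<open>Points of R^n are vectors real^'n, indexed by a finite linearly ordered type 'n
  (the order on indices plays the role of 1 < 2 < ... < n).\<close>

inductive poly_fun :: "(real^'n \<Rightarrow> real) \<Rightarrow> bool" where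
  pf_const: "poly_fun (\<lambda>x. c)"
| pf_coord: "poly_fun (\<lambda>x. x $ i)"
| pf_add: "poly_fun p \<Longrightarrow> poly_fun q \<Longrightarrow> poly_fun (\<lambda>x. p x + q x)"
| pf_mult: "poly_fun p \<Longrightarrow> poly_fun q \<Longrightarrow> poly_fun (\<lambda>x. p x * q x)"

definition vf :: "real^('n::{finite,linorder}) \<Rightarrow> real^('n::{finite,linorder}) \<Rightarrow> real^('n::{finite,linorder})" where
  "vf a x = (\<chi> i. x $ i * ((\<Sum>j\<in>{j. i < j}. a $ j * x $ j) - (\<Sum>j\<in>{j. j < i}. a $ j * x $ j)))"

definition first_integral_on ::
    "(real^'n \<Rightarrow> real^'n) \<Rightarrow> (real^'n \<Rightarrow> real) \<Rightarrow> (real^'n) set \<Rightarrow> bool" where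
  "first_integral_on X F U \<longleftrightarrow> open U \<and>
     (\<forall>x\<in>U. \<exists>D. (F has_derivative D) (at x) \<and> D (X x) = 0)"

definition functionally_independent :: "nat \<Rightarrow> (nat \<Rightarrow> real^'n \<Rightarrow> real) \<Rightarrow> bool" where
  "functionally_independent m F \<longleftrightarrow>
     (\<exists>U. open U \<and> closure U = UNIV \<and>
        (\<forall>x\<in>U. \<exists>D. (\<forall>k<m. (F k has_derivative D k) (at x)) \<and>
            (\<forall>c. (\<forall>v. (\<Sum>k<m. c k * D k v) = 0) \<longrightarrow> (\<forall>k<m. c k = 0))))"

definition superintegrable :: "(real^'n \<Rightarrow> real^'n) \<Rightarrow> bool" where
  "superintegrable X \<longleftrightarrow>
     (\<exists>F U. (\<forall>k<CARD('n) - 1. first_integral_on X (F k) (U k) \<and> closure (U k) = UNIV) \<and>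
            functionally_independent (CARD('n) - 1) F)"

end

theory Submission
  imports Defs
begin


definition lf :: "real^'n \<Rightarrow> 'n set \<Rightarrow> real^'n \<Rightarrow> real" where
  "lf a A x = (\<Sum>i\<in>A. a$i * x$i)"

lemma poly_fun_sum: "finite A \<Longrightarrow> (\<forall>i\<in>A. poly_fun (g i)) \<Longrightarrow> poly_fun (\<lambda>x. \<Sum>i\<in>A. g i x)"
proof (induction A rule: finite_induct)
  case empty then show ?case using pf_const[of 0] by simp
next
  case (insert i A) then show ?case using pf_add[of "g i" "\<lambda>x. \<Sum>i\<in>A. g i x"] by simp
qed

lemma poly_fun_lf: "poly_fun (lf a (A::('n::finite) set))"
  unfolding lf_def
  by (rule poly_fun_sum) (auto intro: pf_mult pf_const pf_coord)

lemma poly_fun_cont: "poly_fun p \<Longrightarrow> continuous_on UNIV p"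
  by (induction rule: poly_fun.induct) (auto intro!: continuous_intros)

lemma coord_deriv: "((\<lambda>x. x$j) has_derivative (\<lambda>v. v$j)) (at x)"
  by (rule bounded_linear_imp_has_derivative) auto

lemma lf_deriv: "(lf a (A::('n::finite) set) has_derivative lf a A) (at x)"
proof -
  have "((\<lambda>x. \<Sum>i\<in>A. a$i * x$i) has_derivative (\<lambda>v. \<Sum>i\<in>A. a$i * v$i)) (at x)"
    by (rule has_derivative_sum) (use has_derivative_mult_right[OF coord_deriv] in auto)
  then show ?thesis unfolding lf_def by (simp add: fun_eq_iff)
qed

lemma lf_add_scale: "lf a A (x + t *\<^sub>R v) = lf a A x + t * lf a A v"
  unfolding lf_def by (simp add: algebra_simps sum.distrib sum_distrib_left)

lemma lf_axis: "lf a (A::('n::finite) set) (axis j 1) = (if j \<in> A then a$j else 0)"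
  unfolding lf_def axis_def by (auto simp: if_distrib sum.If_cases)

lemma lf_split: "lf a (A::('n::finite) set) x = lf a (A \<inter> B) x + lf a (A - B) x"
  unfolding lf_def by (metis Diff_Int_distrib2 Int_absorb Un_Diff_Int finite sum.union_disjoint Diff_disjoint inf_commute)

lemma lie_down:
  fixes a x :: "real^'n::{finite,linorder}"
  assumes dc: "\<And>i j. i \<in> A \<Longrightarrow> j < i \<Longrightarrow> j \<in> A"
  shows "lf a A (vf a x) = lf a A x * lf a (- A) x"
proof -
  let ?g = "\<lambda>i j. a$i * x$i * (a$j * x$j)"
  have "lf a A (vf a x) = (\<Sum>i\<in>A. (\<Sum>j\<in>{j. i<j}. ?g i j) - (\<Sum>j\<in>{j. j<i}. ?g i j))"
    unfolding lf_def vf_def by (simp add: sum_distrib_left right_diff_distrib mult.assoc)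
  also have "\<dots> = (\<Sum>i\<in>A. (\<Sum>j\<in>{j. i<j} \<inter> A. ?g i j) + (\<Sum>j\<in>- A. ?g i j) - (\<Sum>j\<in>{j. j<i}. ?g i j))"
  proof (rule sum.cong[OF refl])
    fix i assume i: "i \<in> A"
    have "{j. i<j} = ({j. i<j} \<inter> A) \<union> (- A)" using i dc by (auto simp: not_less) (metis dc linorder_neqE)
    then have "(\<Sum>j\<in>{j. i<j}. ?g i j) = (\<Sum>j\<in>{j. i<j} \<inter> A. ?g i j) + (\<Sum>j\<in>- A. ?g i j)"
      by (metis (no_types, lifting) Diff_disjoint Int_Diff Int_commute Diff_Compl compl_le_swap2 finite inf.orderE inf_le2 sum.union_disjoint boolean_algebra.conj_cancel_right Int_Un_eq(3))
    then show "(\<Sum>j\<in>{j. i<j}. ?g i j) - (\<Sum>j\<in>{j. j<i}. ?g i j) = (\<Sum>j\<in>{j. i<j} \<inter> A. ?g i j) + (\<Sum>j\<in>- A. ?g i j) - (\<Sum>j\<in>{j. j<i}. ?g i j)" by simp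
  qed
  also have "\<dots> = (\<Sum>i\<in>A. \<Sum>j\<in>- A. ?g i j) + ((\<Sum>i\<in>A. \<Sum>j\<in>{j. i<j} \<inter> A. ?g i j) - (\<Sum>i\<in>A. \<Sum>j\<in>{j. j<i}. ?g i j))"
    by (simp add: sum.distrib sum_subtractf)
  also have "(\<Sum>i\<in>A. \<Sum>j\<in>{j. i<j} \<inter> A. ?g i j) = (\<Sum>i\<in>A. \<Sum>j\<in>{j. j<i}. ?g i j)"
  proof -
    have "(\<Sum>i\<in>A. \<Sum>j\<in>{j. i<j} \<inter> A. ?g i j) = (\<Sum>i\<in>A. \<Sum>j\<in>A. if i < j then ?g i j else 0)"
      by (simp add: sum.If_cases Int_commute)
    also have "\<dots> = (\<Sum>j\<in>A. \<Sum>i\<in>A. if i < j then ?g i j else 0)" by (rule sum.swap)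
    also have "\<dots> = (\<Sum>j\<in>A. \<Sum>i\<in>{i. i<j}. ?g j i)"
    proof (rule sum.cong[OF refl])
      fix j assume j: "j \<in> A"
      have "{i. i<j} = A \<inter> {i. i<j}" using dc j by auto
      then show "(\<Sum>i\<in>A. if i < j then ?g i j else 0) = (\<Sum>i\<in>{i. i<j}. ?g j i)"
        by (simp add: sum.If_cases mult.commute mult.left_commute)
    qed
    finally show ?thesis .
  qed
  finally show ?thesis unfolding lf_def by (simp add: sum_distrib_left sum_distrib_right mult.assoc sum.swap[of _ "-A" A])
qed



definition LD :: "real^('n::{finite,linorder}) \<Rightarrow> (real^('n::{finite,linorder}) \<Rightarrow> real) \<Rightarrow> real^('n::{finite,linorder}) \<Rightarrow> real \<Rightarrow> bool" where
  "LD a g x \<alpha> \<longleftrightarrow> (\<exists>D. (g has_derivative D) (at x) \<and> D (vf a x) = g x * \<alpha>)"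

lemma LD_cong: "LD a g x \<alpha> \<Longrightarrow> \<alpha> = \<beta> \<Longrightarrow> LD a g x \<beta>" by simp

lemma LD_const: "LD a (\<lambda>x. c) x 0"
  unfolding LD_def by (intro exI[of _ "\<lambda>_. 0"]) auto

lemma LD_mult: "LD a f x \<alpha> \<Longrightarrow> LD a g x \<beta> \<Longrightarrow> LD a (\<lambda>x. f x * g x) x (\<alpha> + \<beta>)"
  unfolding LD_def
proof (elim exE conjE)
  fix Df Dg assume f: "(f has_derivative Df) (at x)" and f2: "Df (vf a x) = f x * \<alpha>"
    and g: "(g has_derivative Dg) (at x)" and g2: "Dg (vf a x) = g x * \<beta>"
  show "\<exists>D. ((\<lambda>x. f x * g x) has_derivative D) (at x) \<and> D (vf a x) = f x * g x * (\<alpha> + \<beta>)"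
    by (rule exI, rule conjI, rule has_derivative_mult[OF f g]) (simp add: f2 g2 algebra_simps)
qed

lemma LD_div: "LD a f x \<alpha> \<Longrightarrow> LD a g x \<beta> \<Longrightarrow> g x \<noteq> 0 \<Longrightarrow> LD a (\<lambda>x. f x / g x) x (\<alpha> - \<beta>)"
  unfolding LD_def
proof (elim exE conjE)
  fix Df Dg assume f: "(f has_derivative Df) (at x)" and f2: "Df (vf a x) = f x * \<alpha>"
    and g: "(g has_derivative Dg) (at x)" and g2: "Dg (vf a x) = g x * \<beta>" and gx: "g x \<noteq> 0"
  show "\<exists>D. ((\<lambda>x. f x / g x) has_derivative D) (at x) \<and> D (vf a x) = f x / g x * (\<alpha> - \<beta>)"
    by (rule exI, rule conjI, rule has_derivative_divide'[OF f g gx]) (simp add: f2 g2 gx field_simps)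
qed

lemma LD_coord: "LD a (\<lambda>x. x$j) x (lf a {i. j < i} x - lf a {i. i < j} x)"
  unfolding LD_def
  by (rule exI, rule conjI, rule coord_deriv) (simp add: vf_def lf_def)

lemma LD_down: "(\<And>i j. i \<in> A \<Longrightarrow> j < i \<Longrightarrow> j \<in> A) \<Longrightarrow> LD a (lf a A) x (lf a (-A) x)"
  unfolding LD_def by (rule exI, rule conjI, rule lf_deriv) (rule lie_down)

lemma lf_UNIV_vf: "lf a UNIV (vf a x) = 0"
  using lie_down[of UNIV a x] by (simp add: lf_def)

lemma LD_up: assumes uc: "\<And>i j. i \<in> A \<Longrightarrow> i < j \<Longrightarrow> j \<in> A"
  shows "LD a (lf a A) x (- lf a (-A) x)"
  unfolding LD_def
proof (rule exI, rule conjI, rule lf_deriv)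
  have dc: "\<And>i j. i \<in> -A \<Longrightarrow> j < i \<Longrightarrow> j \<in> -A" using uc by blast
  have "lf a A (vf a x) = lf a UNIV (vf a x) - lf a (-A) (vf a x)"
    using lf_split[where a=a and A=UNIV and x="vf a x" and B="-A"] by simp
  also have "\<dots> = - (lf a (-A) x * lf a A x)" using lf_UNIV_vf lie_down[where A="-A" and a=a and x=x, OF dc] by simp
  finally show "lf a A (vf a x) = lf a A x * - lf a (- A) x" by simp
qed

lemma LD_first_integral: "open U \<Longrightarrow> (\<forall>x\<in>U. LD a F x 0) \<Longrightarrow> first_integral_on (vf a) F U"
  unfolding first_integral_on_def LD_def by auto

lemma dir_deriv:
  assumes F: "(F has_derivative D) (at x)"
    and G: "((\<lambda>t. F (x + t *\<^sub>R v)) has_real_derivative K) (at 0)"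
  shows "D v = K"
proof -
  have l: "((\<lambda>t. x + t *\<^sub>R v) has_derivative (\<lambda>t. t *\<^sub>R v)) (at 0)"
    by (intro derivative_eq_intros) auto
  have "((F \<circ> (\<lambda>t. x + t *\<^sub>R v)) has_derivative (D \<circ> (\<lambda>t. t *\<^sub>R v))) (at 0)"
    by (rule diff_chain_at[OF l]) (simp add: F)
  moreover have "D \<circ> (\<lambda>t. t *\<^sub>R v) = (\<lambda>t. t * D v)"
    using linear_scale[OF bounded_linear.linear[OF has_derivative_bounded_linear[OF F]]] by (auto simp: fun_eq_iff)
  moreover have "(\<lambda>t. t * D v) = (*) (D v)" by (auto simp: fun_eq_iff)
  ultimately have "((\<lambda>t. F (x + t *\<^sub>R v)) has_real_derivative D v) (at 0)"
    by (simp add: has_field_derivative_def o_def)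
  then show ?thesis using G DERIV_unique by blast
qed

lemma dir_deriv_const:
  fixes F :: "'a::real_normed_vector \<Rightarrow> real"
  assumes F: "(F has_derivative D) (at x)" and c: "\<And>t. F (x + t *\<^sub>R v) = F x"
  shows "D v = 0"
  by (rule dir_deriv[OF F]) (simp add: c)

lemma dir_deriv_lin:
  fixes F :: "'a::real_normed_vector \<Rightarrow> real"
  assumes F: "(F has_derivative D) (at x)" and c: "\<And>t. F (x + t *\<^sub>R v) = F x + t * K"
  shows "D v = K"
  by (rule dir_deriv[OF F]) (simp add: c, intro derivative_eq_intros, auto)

lemma dense_Int: "open A \<Longrightarrow> closure A = UNIV \<Longrightarrow> closure B = UNIV \<Longrightarrow> closure (A \<inter> B) = UNIV"
proof -
  assume o: "open A" and a: "closure A = UNIV" and b: "closure B = UNIV"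
  have "A \<subseteq> closure (A \<inter> B)" using open_Int_closure_subset[OF o, of B] b by simp
  then have "closure A \<subseteq> closure (A \<inter> B)" by (rule closure_minimal) simp
  then show ?thesis using a by auto
qed

lemma dense_INT: "finite I \<Longrightarrow> (\<forall>i\<in>I. open (S i) \<and> closure (S i) = UNIV) \<Longrightarrow>
   open (\<Inter>i\<in>I. S i) \<and> closure (\<Inter>i\<in>I. S i) = UNIV"
proof (induction I rule: finite_induct)
  case empty then show ?case by simp
next
  case (insert i I)
  then show ?case using dense_Int[of "S i" "\<Inter>i\<in>I. S i"] by auto
qed

lemma lf_dense:
  fixes a :: "real^'n::finite"
  assumes "k \<in> A" "a$k \<noteq> 0"
  shows "open {x. lf a A x \<noteq> 0} \<and> closure {x. lf a A x \<noteq> 0} = UNIV"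
proof
  show "open {x. lf a A x \<noteq> 0}"
    by (intro open_Collect_neq poly_fun_cont[OF poly_fun_lf] continuous_on_const)
  show "closure {x. lf a A x \<noteq> 0} = UNIV"
  proof (rule set_eqI, simp add: closure_approachable, intro allI impI)
    fix y :: "real^'n" and e :: real assume e: "0 < e"
    show "\<exists>z. lf a A z \<noteq> 0 \<and> dist z y < e"
    proof (cases "lf a A y = 0")
      case False then show ?thesis using e by (intro exI[of _ y]) auto
    next
      case True
      let ?z = "y + (e/2) *\<^sub>R axis k 1"
      have "lf a A ?z = (e/2) * a$k" using True assms by (simp add: lf_add_scale lf_axis)
      moreover have "dist ?z y = e/2" using e by (simp add: dist_norm)
      ultimately show ?thesis using e assms by (intro exI[of _ ?z]) auto
    qed
  qed
qed



lemma lf_compl: "lf a A x = lf a UNIV x - lf a (-A) x"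
  using lf_split[where a=a and A=UNIV and B=A and x=x] by (simp add: Compl_eq_Diff_UNIV)

lemma lf_zero: "(\<forall>i\<in>A. a$i = 0) \<Longrightarrow> lf a A x = 0"
  unfolding lf_def by simp

lemma lf_diffv: "lf a A (u - c *\<^sub>R w) = lf a A u - c * lf a A w"
  unfolding lf_def by (simp add: algebra_simps sum_subtractf sum_distrib_left)

lemma cs1: "- {i. i \<le> j} = {i::'n::linorder. j < i}" by auto
lemma cs2: "- {i. j \<le> i} = {i::'n::linorder. i < j}" by auto
lemma cs3: "- {i. i < j} = {i::'n::linorder. j \<le> i}" by auto
lemma cs4: "- {i. j < i} = {i::'n::linorder. i \<le> j}" by auto

lemma axis_comp: "(x + t *\<^sub>R axis j 1) $ k = (if k = j then x$k + t else x$k)"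
  by (simp add: axis_def)

lemma LD_E1:
  fixes a :: "real^'n::{finite,linorder}"
  assumes z: "\<And>i. i \<le> j \<Longrightarrow> a$i = 0"
  shows "LD a (\<lambda>x. x$j) x (lf a UNIV x)"
proof -
  have "lf a {i. i < j} x = 0" by (rule lf_zero) (auto intro: z)
  moreover have "lf a {i. j < i} x = lf a UNIV x"
    using lf_compl[of a "{i. j < i}" x] lf_zero[of "{i. i \<le> j}" a x] z by (simp add: cs4)
  ultimately show ?thesis using LD_coord[of a j x] by simp
qed

lemma LD_E2:
  fixes a :: "real^'n::{finite,linorder}"
  assumes z: "\<And>i. j \<le> i \<Longrightarrow> a$i = 0"
  shows "LD a (\<lambda>x. x$j) x (- lf a UNIV x)"
proof -
  have "lf a {i. j < i} x = 0" by (rule lf_zero) (auto intro: z)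
  moreover have "lf a {i. i < j} x = lf a UNIV x"
    using lf_compl[of a "{i. i < j}" x] lf_zero[of "{i. j \<le> i}" a x] z by (simp add: cs3)
  ultimately show ?thesis using LD_coord[of a j x] by simp
qed

lemma LD_Mi:
  fixes a :: "real^'n::{finite,linorder}"
  assumes "lf a {i. i \<le> j} x * lf a {i. j \<le> i} x \<noteq> 0"
  shows "LD a (\<lambda>x. x$j / (lf a {i. i \<le> j} x * lf a {i. j \<le> i} x)) x 0"
proof -
  have 1: "LD a (lf a {i. i \<le> j}) x (lf a {i. j < i} x)"
    using LD_down[of "{i. i \<le> j}" a x] by (simp add: cs1)
  have 2: "LD a (lf a {i. j \<le> i}) x (- lf a {i. i < j} x)"
    using LD_up[of "{i. j \<le> i}" a x] by (simp add: cs2)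
  have "LD a (\<lambda>x. x$j / (lf a {i. i \<le> j} x * lf a {i. j \<le> i} x)) x
     ((lf a {i. j < i} x - lf a {i. i < j} x) - (lf a {i. j < i} x + - lf a {i. i < j} x))"
    by (rule LD_div[OF LD_coord LD_mult[OF 1 2] assms])
  then show ?thesis by simp
qed

lemma LD_H: "LD a (\<lambda>x. lf a UNIV x / 1) x 0"
proof -
  have "LD a (lf a UNIV) x (lf a (-UNIV) x)" by (rule LD_down) auto
  then have "LD a (lf a UNIV) x 0" by (simp add: lf_def)
  from LD_div[OF this LD_const[where c=1]] show ?thesis by simp
qed




definition PPf where
  "PPf a f l SN SD j = (if j = l then lf a UNIV else if f < j \<and> j < l then (\<lambda>x. x$j)
     else if j < f then (\<lambda>x. x$j * SD x) else (\<lambda>x. x$j * SN x))"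

definition QQf where
  "QQf a f l SN SD j = (if j = l then (\<lambda>x. 1) else if f < j \<and> j < l then (\<lambda>x. lf a {i. i \<le> j} x * lf a {i. j \<le> i} x)
     else if j < f then SN else SD)"

lemma labels:
  fixes a :: "real^('n::{finite,linorder})" and f l j :: "'n::{finite,linorder}"
    and SN SD \<alpha>N \<alpha>D :: "real^('n::{finite,linorder}) \<Rightarrow> real"
  assumes af: "a$f \<noteq> 0" and al: "a$l \<noteq> 0" and fl: "f \<le> l"
    and supp: "\<And>i. a$i \<noteq> 0 \<Longrightarrow> f \<le> i \<and> i \<le> l"
    and pN: "poly_fun SN" and pD: "poly_fun SD"
    and LN: "\<And>x. LD a SN x (\<alpha>N x)" and LDD: "\<And>x. LD a SD x (\<alpha>D x)"
    and Lsum: "\<And>x. \<alpha>N x - \<alpha>D x = lf a UNIV x"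
    and dN: "closure {x. SN x \<noteq> 0} = UNIV" and dD: "closure {x. SD x \<noteq> 0} = UNIV"
    and jl: "j = l \<or> j \<noteq> f"
  shows "poly_fun (PPf a f l SN SD j) \<and> poly_fun (QQf a f l SN SD j)
    \<and> open {x. QQf a f l SN SD j x \<noteq> 0} \<and> closure {x. QQf a f l SN SD j x \<noteq> 0} = UNIV
    \<and> (\<forall>x. QQf a f l SN SD j x \<noteq> 0 \<longrightarrow> LD a (\<lambda>x. PPf a f l SN SD j x / QQf a f l SN SD j x) x 0)"
proof -
  consider "j = l" | "f < j \<and> j < l" | "j < f" | "l < j" using jl fl by fastforce
  then show ?thesis
  proof cases
    case 1
    then show ?thesis using LD_H[of a] by (simp add: PPf_def QQf_def poly_fun_lf pf_const)
  next
    case 2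
    then have P: "PPf a f l SN SD j = (\<lambda>x. x$j)" and Q: "QQf a f l SN SD j = (\<lambda>x. lf a {i. i \<le> j} x * lf a {i. j \<le> i} x)"
      by (auto simp: PPf_def QQf_def)
    have d1: "open {x. lf a {i. i \<le> j} x \<noteq> 0} \<and> closure {x. lf a {i. i \<le> j} x \<noteq> 0} = UNIV"
      by (rule lf_dense[of f]) (use 2 af in auto)
    have d2: "open {x. lf a {i. j \<le> i} x \<noteq> 0} \<and> closure {x. lf a {i. j \<le> i} x \<noteq> 0} = UNIV"
      by (rule lf_dense[of l]) (use 2 al in auto)
    have e: "{x. lf a {i. i \<le> j} x * lf a {i. j \<le> i} x \<noteq> 0} = {x. lf a {i. i \<le> j} x \<noteq> 0} \<inter> {x. lf a {i. j \<le> i} x \<noteq> 0}"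
      by auto
    show ?thesis unfolding P Q e
      using d1 d2 dense_Int[of "{x. lf a {i. i \<le> j} x \<noteq> 0}" "{x. lf a {i. j \<le> i} x \<noteq> 0}"] LD_Mi[of a j]
      by (auto intro!: pf_coord pf_mult poly_fun_lf)
  next
    case 3
    then have P: "PPf a f l SN SD j = (\<lambda>x. x$j * SD x)" and Q: "QQf a f l SN SD j = SN"
      using fl by (auto simp: PPf_def QQf_def)
    have z: "\<And>i. i \<le> j \<Longrightarrow> a$i = 0" using supp 3 by (meson leD order_le_less_trans)
    have ld: "LD a (\<lambda>x. x$j * SD x / SN x) x 0" if "SN x \<noteq> 0" for x
    proof -
      have "LD a (\<lambda>x. x$j * SD x / SN x) x ((lf a UNIV x + \<alpha>D x) - \<alpha>N x)"
        by (rule LD_div[OF LD_mult[OF LD_E1[OF z] LDD] LN that])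
      then show ?thesis using Lsum[of x] by (simp add: algebra_simps)
    qed
    show ?thesis unfolding P Q using ld dN open_Collect_neq[OF poly_fun_cont[OF pN] continuous_on_const]
      by (auto intro!: pf_coord pf_mult pD pN)
  next
    case 4
    then have P: "PPf a f l SN SD j = (\<lambda>x. x$j * SN x)" and Q: "QQf a f l SN SD j = SD"
      using fl by (auto simp: PPf_def QQf_def)
    have z: "\<And>i. j \<le> i \<Longrightarrow> a$i = 0" using supp 4 by (meson leD order_less_le_trans)
    have ld: "LD a (\<lambda>x. x$j * SN x / SD x) x 0" if "SD x \<noteq> 0" for x
    proof -
      have "LD a (\<lambda>x. x$j * SN x / SD x) x ((- lf a UNIV x + \<alpha>N x) - \<alpha>D x)"
        by (rule LD_div[OF LD_mult[OF LD_E2[OF z] LN] LDD that])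
      then show ?thesis using Lsum[of x] by (simp add: algebra_simps)
    qed
    show ?thesis unfolding P Q using ld dD open_Collect_neq[OF poly_fun_cont[OF pD] continuous_on_const]
      by (auto intro!: pf_coord pf_mult pD pN)
  qed
qed



lemma axis_at: "axis j (1::real) $ k = (if k = j then 1 else 0)" by (simp add: axis_def)

lemma sum_single: "finite S \<Longrightarrow> j \<in> S \<Longrightarrow> (\<forall>j'\<in>S-{j}. g j' = 0) \<Longrightarrow> sum g S = (g j :: real)"
  by (simp add: sum.remove)

lemma lf_single_split: fixes m :: "'n::{finite,linorder}" shows "lf a {i. i \<le> m} x = lf a {i. i < m} x + a$m * x$m"
proof -
  have "lf a {i. i \<le> m} x = lf a ({i. i \<le> m} \<inter> {i. i < m}) x + lf a ({i. i \<le> m} - {i. i < m}) x"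
    by (rule lf_split)
  moreover have "{i. i \<le> m} \<inter> {i. i < m} = {i. i < m}" "{i. i \<le> m} - {i. i < m} = {m}" by auto
  ultimately show ?thesis by (simp add: lf_def)
qed

lemma diag_deriv:
  fixes p s am xm :: real
  assumes "p \<noteq> 0" "s \<noteq> 0"
  shows "((\<lambda>t. (xm + t) / ((p + t * am) * s)) has_real_derivative (s * (p - am * xm) / ((p * s)\<^sup>2))) (at 0)"
  using assms by (auto intro!: derivative_eq_intros simp: field_simps power2_eq_square)


lemma indep:
  fixes a :: "real^('n::{finite,linorder})" and f l z :: "'n::{finite,linorder}"
    and SN SD \<alpha>N \<alpha>D :: "real^('n::{finite,linorder}) \<Rightarrow> real"
  assumes af: "a$f \<noteq> 0" and al: "a$l \<noteq> 0" and fl: "f \<le> l"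
    and supp: "\<And>i. a$i \<noteq> 0 \<Longrightarrow> f \<le> i \<and> i \<le> l"
    and zc: "(z = f \<and> f < l) \<or> (a$z = 0 \<and> f = l)"
    and pN: "poly_fun SN" and pD: "poly_fun SD"
    and LN: "\<And>x. LD a SN x (\<alpha>N x)" and LDD: "\<And>x. LD a SD x (\<alpha>D x)"
    and Lsum: "\<And>x. \<alpha>N x - \<alpha>D x = lf a UNIV x"
    and dN: "closure {x. SN x \<noteq> 0} = UNIV" and dD: "closure {x. SD x \<noteq> 0} = UNIV"
    and iE: "\<And>x t j. j \<noteq> z \<Longrightarrow> a$j = 0 \<Longrightarrow> SN (x + t *\<^sub>R axis j 1) = SN x \<and> SD (x + t *\<^sub>R axis j 1) = SD x"
  shows "\<exists>U. open U \<and> closure U = UNIV \<and> (\<forall>x\<in>U. \<exists>Dl. (\<forall>j\<in>UNIV-{z}.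
      ((\<lambda>x. PPf a f l SN SD j x / QQf a f l SN SD j x) has_derivative Dl j) (at x)) \<and>
      (\<forall>c. (\<forall>v. (\<Sum>j\<in>UNIV-{z}. c j * Dl j v) = 0) \<longrightarrow> (\<forall>j\<in>UNIV-{z}. c j = 0)))"
proof -
  define \<Lambda> where "\<Lambda> = UNIV - {z}"
  define Mi where "Mi = {j. f < j \<and> j < l}"
  define PP where "PP = PPf a f l SN SD"
  define QQ where "QQ = QQf a f l SN SD"
  define FF where "FF = (\<lambda>j x. PP j x / QQ j x)"
  have part: "j \<in> \<Lambda> \<Longrightarrow> j < f \<or> l < j \<or> j \<in> Mi \<or> j = l" for j
  proof -
    assume j: "j \<in> \<Lambda>"
    show ?thesis
    proof (cases "j < f \<or> l < j \<or> j = l")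
      case False
      then have "f \<le> j" "j \<le> l" "j \<noteq> l" by (auto simp: not_less)
      moreover have "j \<noteq> f" using zc j \<open>j \<noteq> l\<close> unfolding \<Lambda>_def by auto
      ultimately show ?thesis unfolding Mi_def by auto
    qed auto
  qed
  have lL: "l \<in> \<Lambda>" using zc al unfolding \<Lambda>_def by auto
  have MiL: "Mi \<subseteq> \<Lambda>" using zc unfolding \<Lambda>_def Mi_def by auto
  have aE: "j < f \<or> l < j \<Longrightarrow> a$j = 0" for j using supp by (meson leD)
  have zE: "j \<in> \<Lambda> \<Longrightarrow> j \<noteq> z" for j unfolding \<Lambda>_def by auto
  define T where "T = (\<lambda>j. {x. lf a {i. i \<le> j} x \<noteq> 0} \<inter> {x. lf a {i. j \<le> i} x \<noteq> 0} \<inter> {x. lf a {i. i < j} x \<noteq> 0})"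
  define U where "U = {x. SN x \<noteq> 0} \<inter> {x. SD x \<noteq> 0} \<inter> (\<Inter>j\<in>Mi. T j)"
  have oT: "open (T j) \<and> closure (T j) = UNIV" if "j \<in> Mi" for j
  proof -
    have d1: "open {x. lf a {i. i \<le> j} x \<noteq> 0} \<and> closure {x. lf a {i. i \<le> j} x \<noteq> 0} = UNIV"
      by (rule lf_dense[of f]) (use that af in \<open>auto simp: Mi_def\<close>)
    have d2: "open {x. lf a {i. j \<le> i} x \<noteq> 0} \<and> closure {x. lf a {i. j \<le> i} x \<noteq> 0} = UNIV"
      by (rule lf_dense[of l]) (use that al in \<open>auto simp: Mi_def\<close>)
    have d3: "open {x. lf a {i. i < j} x \<noteq> 0} \<and> closure {x. lf a {i. i < j} x \<noteq> 0} = UNIV"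
      by (rule lf_dense[of f]) (use that af in \<open>auto simp: Mi_def\<close>)
    have "open ({x. lf a {i. i \<le> j} x \<noteq> 0} \<inter> {x. lf a {i. j \<le> i} x \<noteq> 0})"
      "closure ({x. lf a {i. i \<le> j} x \<noteq> 0} \<inter> {x. lf a {i. j \<le> i} x \<noteq> 0}) = UNIV"
      using d1 d2 dense_Int[of "{x. lf a {i. i \<le> j} x \<noteq> 0}" "{x. lf a {i. j \<le> i} x \<noteq> 0}"] by auto
    then show ?thesis unfolding T_def using d3 dense_Int[of "{x. lf a {i. i \<le> j} x \<noteq> 0} \<inter> {x. lf a {i. j \<le> i} x \<noteq> 0}" "{x. lf a {i. i < j} x \<noteq> 0}"]
      by auto
  qed
  have oI: "open (\<Inter>j\<in>Mi. T j) \<and> closure (\<Inter>j\<in>Mi. T j) = UNIV"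
    by (rule dense_INT) (use oT in auto)
  have oN: "open {x. SN x \<noteq> 0}" "open {x. SD x \<noteq> 0}"
    by (intro open_Collect_neq poly_fun_cont pN pD continuous_on_const)+
  have oU: "open U" unfolding U_def using oN oI by auto
  have c1: "closure ({x. SN x \<noteq> 0} \<inter> {x. SD x \<noteq> 0}) = UNIV"
    using dense_Int[OF oN(1) dN dD] .
  have cU: "closure U = UNIV" unfolding U_def
    using dense_Int[OF _ c1 conjunct2[OF oI]] oN by auto
  have main: "\<exists>Dl. (\<forall>j\<in>\<Lambda>. (FF j has_derivative Dl j) (at x)) \<and>
      (\<forall>c. (\<forall>v. (\<Sum>j\<in>\<Lambda>. c j * Dl j v) = 0) \<longrightarrow> (\<forall>j\<in>\<Lambda>. c j = 0))" if xU: "x \<in> U" for x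
  proof -
    have SNx: "SN x \<noteq> 0" and SDx: "SD x \<noteq> 0" and Tx: "\<And>j. j \<in> Mi \<Longrightarrow> x \<in> T j"
      using xU unfolding U_def by auto
    have Qx: "QQ j x \<noteq> 0" if "j \<in> \<Lambda>" for j
      using part[OF that] SNx SDx Tx[of j] fl unfolding QQ_def QQf_def T_def Mi_def by auto
    have "\<forall>j\<in>\<Lambda>. \<exists>D. (FF j has_derivative D) (at x)"
    proof
      fix j assume j: "j \<in> \<Lambda>"
      have "j = l \<or> j \<noteq> f" using zc j unfolding \<Lambda>_def by auto
      from labels[OF af al fl supp pN pD LN LDD Lsum dN dD this] Qx[OF j]
      have "LD a (FF j) x 0" unfolding FF_def PP_def QQ_def by auto
      then show "\<exists>D. (FF j has_derivative D) (at x)" unfolding LD_def by auto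
    qed
    then obtain Dl where Dl: "\<And>j. j \<in> \<Lambda> \<Longrightarrow> (FF j has_derivative Dl j) (at x)" by metis
    have indep: "\<forall>j\<in>\<Lambda>. c j = 0" if h: "\<And>v. (\<Sum>j\<in>\<Lambda>. c j * Dl j v) = 0" for c
    proof -
      have s1: "c j = 0" if j: "j \<in> \<Lambda>" "j < f \<or> l < j" for j
      proof -
        let ?v = "axis j (1::real)"
        have aj: "a$j = 0" using aE j by auto
        have jz: "j \<noteq> z" using zE j by auto
        have inv: "Dl j' ?v = 0" if j': "j' \<in> \<Lambda> - {j}" for j'
        proof (rule dir_deriv_const[OF Dl])
          show "j' \<in> \<Lambda>" using j' by auto
          fix t
          have "PP j' (x + t *\<^sub>R ?v) = PP j' x" "QQ j' (x + t *\<^sub>R ?v) = QQ j' x"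
            using j' aj iE[OF jz aj] by (auto simp: PP_def QQ_def PPf_def QQf_def axis_comp lf_add_scale lf_axis axis_at)
          then show "FF j' (x + t *\<^sub>R ?v) = FF j' x" unfolding FF_def by simp
        qed
        define K where "K = (if j < f then SD x / SN x else SN x / SD x)"
        have K0: "K \<noteq> 0" unfolding K_def using SNx SDx by auto
        have dg: "Dl j ?v = K"
        proof (rule dir_deriv_lin[OF Dl[OF j(1)]])
          fix t
          have jl: "j \<noteq> l" "\<not> (f < j \<and> j < l)" using j fl by auto
          show "FF j (x + t *\<^sub>R ?v) = FF j x + t * K"
            using j(2) jl iE[OF jz aj, of x t] fl SNx SDx
            by (auto simp: FF_def PP_def QQ_def PPf_def QQf_def axis_comp K_def field_simps)
        qed
        have "(\<Sum>j'\<in>\<Lambda>. c j' * Dl j' ?v) = c j * Dl j ?v"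
          by (rule sum_single) (use j inv in auto)
        then show ?thesis using h[of ?v] dg K0 by simp
      qed
      have s2: "\<forall>j\<in>Mi. c j = 0"
      proof (rule ccontr)
        assume "\<not> (\<forall>j\<in>Mi. c j = 0)"
        then have ne: "{j\<in>Mi. c j \<noteq> 0} \<noteq> {}" by auto
        define m where "m = Max {j\<in>Mi. c j \<noteq> 0}"
        have m: "m \<in> Mi" "c m \<noteq> 0" using Max_in[OF _ ne] unfolding m_def by auto
        have mmax: "c j = 0" if "j \<in> Mi" "m < j" for j
        proof (rule ccontr)
          assume "c j \<noteq> 0"
          then have "j \<le> m" unfolding m_def by (intro Max_ge) (use that in auto)
          then show False using that by simp
        qed
        have mfl: "f < m" "m < l" using m unfolding Mi_def by auto
        define v where "v = axis m (1::real) - (a$m / a$l) *\<^sub>R axis l 1"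
        have lfv: "lf a A v = (if m \<in> A then a$m else 0) - (if l \<in> A then a$m else 0)" for A
          unfolding v_def lf_diffv lf_axis using al by auto
        have vc: "v $ k = (if k = m then 1 else 0) - (if k = l then a$m / a$l else 0)" for k
          unfolding v_def by (auto simp: axis_def)
        have zer: "c j' * Dl j' v = 0" if j': "j' \<in> \<Lambda> - {m}" for j'
        proof -
          consider "j' < f \<or> l < j'" | "j' \<in> Mi" "m < j'" | "j' \<in> Mi" "j' < m" | "j' = l"
            using part[of j'] j' by (metis DiffE insertI1 linorder_neqE)
          then show ?thesis
          proof cases
            case 1 then show ?thesis using s1 j' by auto
          next
            case 2 then show ?thesis using mmax by auto
          next
            case 3
            have "Dl j' v = 0"
            proof (rule dir_deriv_const[OF Dl])
              show "j' \<in> \<Lambda>" using j' by auto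
              fix t
              have "PP j' (x + t *\<^sub>R v) = PP j' x" "QQ j' (x + t *\<^sub>R v) = QQ j' x"
                using 3 mfl by (auto simp: Mi_def PP_def QQ_def PPf_def QQf_def lf_add_scale lfv vc)
              then show "FF j' (x + t *\<^sub>R v) = FF j' x" unfolding FF_def by simp
            qed
            then show ?thesis by simp
          next
            case 4
            have "Dl j' v = 0"
            proof (rule dir_deriv_const[OF Dl])
              show "j' \<in> \<Lambda>" using j' by auto
              fix t
              show "FF j' (x + t *\<^sub>R v) = FF j' x"
                using 4 by (auto simp: FF_def PP_def QQ_def PPf_def QQf_def lf_add_scale lfv)
            qed
            then show ?thesis by simp
          qed
        qed
        have Tm: "x \<in> T m" using Tx m by auto
        let ?p = "lf a {i. i \<le> m} x" and ?s = "lf a {i. m \<le> i} x"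
        have p0: "?p \<noteq> 0" and s0: "?s \<noteq> 0" and q0: "lf a {i. i < m} x \<noteq> 0"
          using Tm unfolding T_def by auto
        have dg: "Dl m v = ?s * (?p - a$m * x$m) / ((?p * ?s)\<^sup>2)"
        proof (rule dir_deriv[OF Dl])
          show "m \<in> \<Lambda>" using m MiL by auto
          have "(\<lambda>t. FF m (x + t *\<^sub>R v)) = (\<lambda>t. (x$m + t) / ((?p + t * a$m) * ?s))"
            using mfl by (auto simp: fun_eq_iff FF_def PP_def QQ_def PPf_def QQf_def lf_add_scale lfv vc)
          then show "((\<lambda>t. FF m (x + t *\<^sub>R v)) has_real_derivative ?s * (?p - a$m * x$m) / ((?p * ?s)\<^sup>2)) (at 0)"
            using diag_deriv[OF p0 s0, of "x$m" "a$m"] by simp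
        qed
        have dg0: "Dl m v \<noteq> 0" unfolding dg using p0 s0 q0 lf_single_split[of a m x] by simp
        have "(\<Sum>j'\<in>\<Lambda>. c j' * Dl j' v) = c m * Dl m v"
          by (rule sum_single) (use m MiL zer in auto)
        then show False using h[of v] dg0 m by simp
      qed
      have s3: "c l = 0"
      proof -
        let ?v = "axis l (1::real)"
        have dg: "Dl l ?v = a$l"
        proof (rule dir_deriv_lin[OF Dl[OF lL]])
          fix t
          show "FF l (x + t *\<^sub>R ?v) = FF l x + t * a$l"
            by (simp add: FF_def PP_def QQ_def PPf_def QQf_def lf_add_scale lf_axis)
        qed
        have "(\<Sum>j'\<in>\<Lambda>. c j' * Dl j' ?v) = c l * Dl l ?v"
          by (rule sum_single) (use lL s1 s2 part in \<open>auto\<close>)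
        then show ?thesis using h[of ?v] dg al by simp
      qed
      show ?thesis using s1 s2 s3 part by blast
    qed
    show ?thesis using Dl indep by blast
  qed
  show ?thesis
    by (rule exI[of _ U]) (use oU cU main in \<open>auto simp: \<Lambda>_def FF_def PP_def QQ_def\<close>)
qed



lemma final:
  fixes a :: "real^('n::{finite,linorder})" and f l z :: "'n::{finite,linorder}"
    and SN SD \<alpha>N \<alpha>D :: "real^('n::{finite,linorder}) \<Rightarrow> real"
  assumes af: "a$f \<noteq> 0" and al: "a$l \<noteq> 0" and fl: "f \<le> l"
    and supp: "\<And>i. a$i \<noteq> 0 \<Longrightarrow> f \<le> i \<and> i \<le> l"
    and zc: "(z = f \<and> f < l) \<or> (a$z = 0 \<and> f = l)"
    and pN: "poly_fun SN" and pD: "poly_fun SD"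
    and LN: "\<And>x. LD a SN x (\<alpha>N x)" and LDD: "\<And>x. LD a SD x (\<alpha>D x)"
    and Lsum: "\<And>x. \<alpha>N x - \<alpha>D x = lf a UNIV x"
    and dN: "closure {x. SN x \<noteq> 0} = UNIV" and dD: "closure {x. SD x \<noteq> 0} = UNIV"
    and iE: "\<And>x t j. j \<noteq> z \<Longrightarrow> a$j = 0 \<Longrightarrow> SN (x + t *\<^sub>R axis j 1) = SN x \<and> SD (x + t *\<^sub>R axis j 1) = SD x"
  shows "(\<exists>P Q. (\<forall>k<CARD('n) - 1.
              poly_fun (P k) \<and> poly_fun (Q k) \<and> (\<exists>x. Q k x \<noteq> 0) \<and>
              first_integral_on (vf a) (\<lambda>x. P k x / Q k x) {x. Q k x \<noteq> 0}) \<and>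
            functionally_independent (CARD('n) - 1) (\<lambda>k x. P k x / Q k x))
         \<and> superintegrable (vf a)"
proof -
  define \<Lambda> where "\<Lambda> = UNIV - {z}"
  have cL: "card \<Lambda> = CARD('n) - 1" unfolding \<Lambda>_def by (simp add: card_Diff_singleton)
  obtain \<sigma> where bij: "bij_betw \<sigma> {0..<card \<Lambda>} \<Lambda>" using ex_bij_betw_nat_finite[of \<Lambda>] by auto
  have sL: "\<sigma> k \<in> \<Lambda>" if "k < CARD('n) - 1" for k using bij that cL by (auto dest: bij_betwE)
  define P where "P = (\<lambda>k. PPf a f l SN SD (\<sigma> k))"
  define Q where "Q = (\<lambda>k. QQf a f l SN SD (\<sigma> k))"
  have lab: "poly_fun (P k) \<and> poly_fun (Q k) \<and> open {x. Q k x \<noteq> 0} \<and> closure {x. Q k x \<noteq> 0} = UNIV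
    \<and> (\<forall>x. Q k x \<noteq> 0 \<longrightarrow> LD a (\<lambda>x. P k x / Q k x) x 0)" if k: "k < CARD('n) - 1" for k
  proof -
    have "\<sigma> k = l \<or> \<sigma> k \<noteq> f" using sL[OF k] zc unfolding \<Lambda>_def by auto
    from labels[OF af al fl supp pN pD LN LDD Lsum dN dD this] show ?thesis unfolding P_def Q_def .
  qed
  have fi: "first_integral_on (vf a) (\<lambda>x. P k x / Q k x) {x. Q k x \<noteq> 0} \<and> closure {x. Q k x \<noteq> 0} = UNIV"
    if k: "k < CARD('n) - 1" for k
    using lab[OF k] by (auto intro: LD_first_integral)
  have ne: "\<exists>x. Q k x \<noteq> 0" if k: "k < CARD('n) - 1" for k
  proof (rule ccontr)
    assume "\<not> (\<exists>x. Q k x \<noteq> 0)"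
    then have "{x. Q k x \<noteq> 0} = {}" by auto
    then show False using lab[OF k] by simp
  qed
  have FI: "functionally_independent (CARD('n) - 1) (\<lambda>k x. P k x / Q k x)"
  proof -
    obtain U where U: "open U" "closure U = UNIV" and UU: "\<forall>x\<in>U. \<exists>Dl. (\<forall>j\<in>UNIV-{z}.
      ((\<lambda>x. PPf a f l SN SD j x / QQf a f l SN SD j x) has_derivative Dl j) (at x)) \<and>
      (\<forall>c. (\<forall>v. (\<Sum>j\<in>UNIV-{z}. c j * Dl j v) = 0) \<longrightarrow> (\<forall>j\<in>UNIV-{z}. c j = 0))"
      using indep[OF af al fl supp zc pN pD LN LDD Lsum dN dD iE] by blast
    show ?thesis unfolding functionally_independent_def
    proof (intro exI[of _ U] conjI U ballI)
      fix x assume "x \<in> U"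
      then obtain Dl where Dl: "\<forall>j\<in>\<Lambda>. ((\<lambda>x. PPf a f l SN SD j x / QQf a f l SN SD j x) has_derivative Dl j) (at x)"
        and ind: "\<forall>c. (\<forall>v. (\<Sum>j\<in>\<Lambda>. c j * Dl j v) = 0) \<longrightarrow> (\<forall>j\<in>\<Lambda>. c j = 0)"
        using UU unfolding \<Lambda>_def by blast
      show "\<exists>D. (\<forall>k<CARD('n) - 1. ((\<lambda>x. P k x / Q k x) has_derivative D k) (at x)) \<and>
            (\<forall>c. (\<forall>v. (\<Sum>k<CARD('n) - 1. c k * D k v) = 0) \<longrightarrow> (\<forall>k<CARD('n) - 1. c k = 0))"
      proof (intro exI[of _ "\<lambda>k. Dl (\<sigma> k)"] conjI allI impI)
        fix k assume "k < CARD('n) - 1"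
        then show "((\<lambda>x. P k x / Q k x) has_derivative Dl (\<sigma> k)) (at x)"
          using Dl sL unfolding P_def Q_def by blast
      next
        fix c k assume h: "\<forall>v. (\<Sum>k<CARD('n) - 1. c k * Dl (\<sigma> k) v) = 0" and k: "k < CARD('n) - 1"
        define c' where "c' = (\<lambda>j. c (the_inv_into {0..<card \<Lambda>} \<sigma> j))"
        have inj: "inj_on \<sigma> {0..<card \<Lambda>}" using bij by (simp add: bij_betw_def)
        have c'\<sigma>: "c' (\<sigma> i) = c i" if "i \<in> {0..<card \<Lambda>}" for i
          unfolding c'_def using the_inv_into_f_f[OF inj that] by simp
        have "(\<Sum>j\<in>\<Lambda>. c' j * Dl j v) = 0" for v
        proof -
          have "(\<Sum>j\<in>\<Lambda>. c' j * Dl j v) = (\<Sum>i\<in>{0..<card \<Lambda>}. c' (\<sigma> i) * Dl (\<sigma> i) v)"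
            using sum.reindex_bij_betw[OF bij, of "\<lambda>j. c' j * Dl j v"] by simp
          also have "\<dots> = (\<Sum>i<CARD('n) - 1. c i * Dl (\<sigma> i) v)"
            using c'\<sigma> cL by (simp add: atLeast0LessThan)
          finally show ?thesis using h by simp
        qed
        then have "\<forall>j\<in>\<Lambda>. c' j = 0" using ind by blast
        then show "c k = 0" using c'\<sigma>[of k] sL[OF k] k cL by simp
      qed
    qed
  qed
  show ?thesis
  proof
    show "\<exists>P Q. (\<forall>k<CARD('n) - 1.
              poly_fun (P k) \<and> poly_fun (Q k) \<and> (\<exists>x. Q k x \<noteq> 0) \<and>
              first_integral_on (vf a) (\<lambda>x. P k x / Q k x) {x. Q k x \<noteq> 0}) \<and>
            functionally_independent (CARD('n) - 1) (\<lambda>k x. P k x / Q k x)"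
      using lab fi ne FI by blast
    show "superintegrable (vf a)" unfolding superintegrable_def
      by (rule exI[of _ "\<lambda>k x. P k x / Q k x"], rule exI[of _ "\<lambda>k. {x. Q k x \<noteq> 0}"]) (use fi FI in auto)
  qed
qed



lemma coord_dense: "closure {x::real^('n::finite). x$k \<noteq> 0} = UNIV"
proof -
  have e: "\<And>x::real^'n. lf (axis k 1) {k} x = x$k" by (simp add: lf_def)
  have "closure {x::real^'n. lf (axis k 1) {k} x \<noteq> 0} = UNIV" by (rule conjunct2[OF lf_dense[of k]]) auto
  then show ?thesis unfolding e .
qed

theorem theorem2p5:
  fixes a :: "real^'n::{finite,linorder}"
  assumes "a \<noteq> 0"
  shows "(\<exists>P Q. (\<forall>k<CARD('n) - 1.
              poly_fun (P k) \<and> poly_fun (Q k) \<and> (\<exists>x. Q k x \<noteq> 0) \<and>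
              first_integral_on (vf a) (\<lambda>x. P k x / Q k x) {x. Q k x \<noteq> 0}) \<and>
            functionally_independent (CARD('n) - 1) (\<lambda>k x. P k x / Q k x))
         \<and> superintegrable (vf a)"
proof (cases "CARD('n) = 1")
  case True
  have FI: "functionally_independent (CARD('n) - 1) F" for F :: "nat \<Rightarrow> (real,'n) vec \<Rightarrow> real"
    unfolding functionally_independent_def using True by (intro exI[of _ UNIV]) auto
  show ?thesis using True FI unfolding superintegrable_def by auto
next
  case False
  have n2: "CARD('n) \<ge> 2" using False by (metis One_nat_def Suc_1 Suc_leI finite_UNIV_card_ge_0 le_neq_implies_less finite)
  define S where "S = {i. a$i \<noteq> 0}"
  have Sne: "S \<noteq> {}" using assms unfolding S_def by (auto simp: vec_eq_iff)
  define f where "f = Min S"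
  define l where "l = Max S"
  have af: "a$f \<noteq> 0" using Min_in[OF _ Sne] unfolding f_def S_def by auto
  have al: "a$l \<noteq> 0" using Max_in[OF _ Sne] unfolding l_def S_def by auto
  have supp: "\<And>i. a$i \<noteq> 0 \<Longrightarrow> f \<le> i \<and> i \<le> l" unfolding f_def l_def S_def by auto
  have fl: "f \<le> l" using supp af by auto
  show ?thesis
  proof (cases "f < l")
    case True
    show ?thesis
    proof (rule final[OF af al fl supp, where z = f and SN = "lf a {i. i \<le> f}" and SD = "lf a {i. f < i}"
        and \<alpha>N = "lf a {i. f < i}" and \<alpha>D = "\<lambda>x. - lf a {i. i \<le> f} x"])
      show "(f = f \<and> f < l) \<or> (a$f = 0 \<and> f = l)" using True by auto
      show "poly_fun (lf a {i. i \<le> f})" "poly_fun (lf a {i. f < i})" by (rule poly_fun_lf)+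
      show "LD a (lf a {i. i \<le> f}) x (lf a {i. f < i} x)" for x
        using LD_down[of "{i. i \<le> f}" a x] by (simp add: cs1)
      show "LD a (lf a {i. f < i}) x (- lf a {i. i \<le> f} x)" for x
        using LD_up[of "{i. f < i}" a x] by (simp add: cs4)
      show "lf a {i. f < i} x - - lf a {i. i \<le> f} x = lf a UNIV x" for x
        using lf_compl[of a "{i. f < i}" x] by (simp add: cs4)
      show "closure {x. lf a {i. i \<le> f} x \<noteq> 0} = UNIV" by (rule conjunct2[OF lf_dense[of f]]) (use af in auto)
      show "closure {x. lf a {i. f < i} x \<noteq> 0} = UNIV" by (rule conjunct2[OF lf_dense[of l]]) (use al True in auto)
      show "lf a {i. i \<le> f} (x + t *\<^sub>R axis j 1) = lf a {i. i \<le> f} x \<and> lf a {i. f < i} (x + t *\<^sub>R axis j 1) = lf a {i. f < i} x"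
        if "j \<noteq> f" "a$j = 0" for x t j
        using that by (simp add: lf_add_scale lf_axis)
    qed
  next
    case False
    then have fleq: "f = l" using fl by auto
    define e0 where "e0 = Min (UNIV :: 'n set)"
    define e1 where "e1 = Max (UNIV :: 'n set)"
    have e0le: "e0 \<le> i" for i unfolding e0_def by simp
    have e1ge: "i \<le> e1" for i unfolding e1_def by simp
    show ?thesis
    proof (cases "e0 < f")
      case True
      have z: "\<And>i. i \<le> e0 \<Longrightarrow> a$i = 0" using supp True by (meson leD order_le_less_trans)
      show ?thesis
      proof (rule final[OF af al fl supp, where z = e0 and SN = "\<lambda>x. x$e0" and SD = "\<lambda>x. 1"
          and \<alpha>N = "lf a UNIV" and \<alpha>D = "\<lambda>x. 0"])
        show "(e0 = f \<and> f < l) \<or> (a$e0 = 0 \<and> f = l)" using fleq z by auto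
        show "poly_fun (\<lambda>x. x$e0)" "poly_fun (\<lambda>x::(real,'n) vec. 1::real)" by (rule pf_coord pf_const)+
        show "LD a (\<lambda>x. x$e0) x (lf a UNIV x)" for x by (rule LD_E1[OF z])
        show "LD a (\<lambda>x. 1) x 0" for x by (rule LD_const)
        show "lf a UNIV x - 0 = lf a UNIV x" for x by simp
        show "closure {x::(real,'n) vec. x$e0 \<noteq> 0} = UNIV" by (rule coord_dense)
        show "closure {x::(real,'n) vec. (1::real) \<noteq> 0} = UNIV" by simp
        show "(x + t *\<^sub>R axis j (1::real)) $ e0 = x $ e0 \<and> (1::real) = 1" if "j \<noteq> e0" "a$j = 0" for x t j
          using that by (simp add: axis_at)
      qed
    next
      case False
      then have fe0: "f = e0" using e0le[of f] by auto
      have ne: "e0 \<noteq> e1"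
      proof
        assume "e0 = e1"
        then have "i = e0" for i using e0le[of i] e1ge[of i] by auto
        then have "(UNIV::'n set) = {e0}" by auto
        then show False using n2 by (metis card_1_singleton_iff card.empty card_insert_disjoint empty_iff finite.emptyI One_nat_def numeral_le_one_iff semiring_norm(69))
      qed
      have z: "\<And>i. e1 \<le> i \<Longrightarrow> a$i = 0"
      proof -
        fix i assume "e1 \<le> i"
        then have "i = e1" using e1ge[of i] by auto
        moreover have "l < e1" using fe0 fleq ne e1ge[of l] by auto
        ultimately show "a$i = 0" using supp by (meson leD)
      qed
      show ?thesis
      proof (rule final[OF af al fl supp, where z = e1 and SN = "\<lambda>x. 1" and SD = "\<lambda>x. x$e1"
          and \<alpha>N = "\<lambda>x. 0" and \<alpha>D = "\<lambda>x. - lf a UNIV x"])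
        show "(e1 = f \<and> f < l) \<or> (a$e1 = 0 \<and> f = l)" using fleq z by auto
        show "poly_fun (\<lambda>x. x$e1)" "poly_fun (\<lambda>x::(real,'n) vec. 1::real)" by (rule pf_coord pf_const)+
        show "LD a (\<lambda>x. x$e1) x (- lf a UNIV x)" for x by (rule LD_E2[OF z])
        show "LD a (\<lambda>x. 1) x 0" for x by (rule LD_const)
        show "0 - - lf a UNIV x = lf a UNIV x" for x by simp
        show "closure {x::(real,'n) vec. x$e1 \<noteq> 0} = UNIV" by (rule coord_dense)
        show "closure {x::(real,'n) vec. (1::real) \<noteq> 0} = UNIV" by simp
        show "(1::real) = 1 \<and> (x + t *\<^sub>R axis j (1::real)) $ e1 = x $ e1" if "j \<noteq> e1" "a$j = 0" for x t j
          using that by (simp add: axis_at)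
      qed
    qed
  qed
qed



end
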